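(* Let $\mathbb{F}_q$ be a finite field. For all $u,v\in\mathbb{F}_q$ with $u^3\ne27$ and $v^3\ne27$, we have $E_{\mathrm{H},u}\cong_{\mathbb{F}_q}E_{\mathrm{H},v}$ if and only if there exist $\zeta_1,\zeta_2\in\mathbb{F}_q$ with $\zeta_1^3=\zeta_2^3=1$ such that either (1) $v=\zeta_1u$, or (2) $q\equiv1\pmod3$ and $v=\frac{3\zeta_1(u+6\zeta_2)}{u-3\zeta_2}$.
   Context: For $u\in\mathbb{F}_q$ with $u^3\ne27$, the Hessian curve $E_{\mathrm{H},u}$ is the elliptic curve $X^3+Y^3+1=uXY$ over $\mathbb{F}_q$. Two such curves are $\mathbb{F}_q$-isomorphic ($\cong_{\mathbb{F}_q}$) if they are birationally equivalent over $\mathbb{F}_q$, equivalently if their Weierstrass models are isomorphic via a Weierstrass change of variables $X\mapsto\alpha^2\tilde X+\beta$, $Y\mapsto\alpha^3\tilde Y+\alpha^2\gamma\tilde X+\delta$ with $\alpha,\beta,\gamma,\delta\in\mathbb{F}_q$, $\alpha\ne0$. *)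

theory Defs
  imports Main
begin

text \<open>A (long) Weierstrass equation
  Y^2 + a1 X Y + a3 Y = X^3 + a2 X^2 + a4 X + a6 is represented by its coefficient
  tuple (a1, a2, a3, a4, a6).\<close>

type_synonym 'a weier = "'a \<times> 'a \<times> 'a \<times> 'a \<times> 'a"

text \<open>Isomorphism of Weierstrass models over the base field via the change of variables
  X = alpha^2 X' + beta, Y = alpha^3 Y' + alpha^2 gamma X' + delta
  (alpha, beta, gamma, delta in the field, alpha nonzero); the transformed coefficients are
  given by the standard formulas (Silverman, Table 3.1, with u = alpha, r = beta,
  s = gamma, t = delta).\<close>

definition weier_iso :: "'a::field weier \<Rightarrow> 'a weier \<Rightarrow> bool" where
  "weier_iso E E' \<longleftrightarrow>
     (case E of (a1, a2, a3, a4, a6) \<Rightarrow> case E' of (b1, b2, b3, b4, b6) \<Rightarrow>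
       (\<exists>\<alpha> \<beta> \<gamma> \<delta>. \<alpha> \<noteq> 0 \<and>
          \<alpha> * b1 = a1 + 2 * \<gamma> \<and>
          \<alpha>^2 * b2 = a2 - \<gamma> * a1 + 3 * \<beta> - \<gamma>^2 \<and>
          \<alpha>^3 * b3 = a3 + \<beta> * a1 + 2 * \<delta> \<and>
          \<alpha>^4 * b4 = a4 - \<gamma> * a3 + 2 * \<beta> * a2 - (\<delta> + \<beta> * \<gamma>) * a1
                       + 3 * \<beta>^2 - 2 * \<gamma> * \<delta> \<and>
          \<alpha>^6 * b6 = a6 + \<beta> * a4 + \<beta>^2 * a2 + \<beta>^3 - \<delta> * a3 - \<delta>^2
                       - \<beta> * \<delta> * a1))"

text \<open>Weierstrass model of the Hessian curve X^3 + Y^3 + 1 = u X Y (u^3 \<noteq> 27):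
  Y^2 + (u+6) X Y + (u^2+3u+9) Y = X^3.  It is obtained, over the base field and in every
  characteristic, by the projective linear change of coordinates
  (X:Y:Z) \<mapsto> (X+Y+Z : u X + 3Y + 3Z : 3X + 3Y + u Z) (determinant -(u-3)^2) followed by a
  scaling; its discriminant is (u^3-27)^3.\<close>

definition hessian_weier :: "'a::field \<Rightarrow> 'a weier" where
  "hessian_weier u = (u + 6, 0, u^2 + 3 * u + 9, 0, 0)"

definition hessian_iso :: "'a::field \<Rightarrow> 'a \<Rightarrow> bool" where
  "hessian_iso u v \<longleftrightarrow> weier_iso (hessian_weier u) (hessian_weier v)"

end

theory Submission
  imports Defs "HOL-Computational_Algebra.Polynomial"
begin


definition hiso :: "'a::field \<Rightarrow> 'a \<Rightarrow> 'a \<Rightarrow> 'a \<Rightarrow> 'a \<Rightarrow> 'a \<Rightarrow> 'a \<Rightarrow> 'a \<Rightarrow> bool" where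
 "hiso A B A' B' a b g d \<longleftrightarrow> a \<noteq> 0 \<and> a * A' = A + 2*g \<and> g^2 + g*A = 3*b \<and>
    a^3 * B' = B + b*A + 2*d \<and> g*B + (d + b*g)*A + 2*g*d = 3*b^2 \<and> b^3 = d*B + d^2 + b*d*A"

lemma eqdiff: "(x::'a::field) - y = w - z \<Longrightarrow> (x = y) \<longleftrightarrow> (z = w)"
  by (metis eq_iff_diff_eq_0 minus_diff_eq neg_equal_0_iff_equal)

lemma eqdiff2: "(x::'a::field) - y = z - w \<Longrightarrow> (x = y) \<longleftrightarrow> (z = w)"
  by (metis eq_iff_diff_eq_0)

lemma hessian_iso_hiso:
  "hessian_iso u v \<longleftrightarrow> (\<exists>a b g d. hiso (u+6) (u^2+3*u+9) (v+6) (v^2+3*v+9) a b g d)"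
  unfolding hessian_iso_def hessian_weier_def weier_iso_def hiso_def
  apply (simp only: prod.case)
  apply (intro ex_cong1 arg_cong2[where f="(\<and>)"] refl)
  apply ((rule eqdiff, algebra) | (rule eqdiff2, algebra))+
  done

lemma hiso_trans:
  assumes "hiso A B A' B' a1 b1 g1 d1" "hiso A' B' A'' B'' a2 b2 g2 d2"
  shows "hiso A B A'' B'' (a1*a2) (b1 + a1^2*b2) (g1 + a1*g2) (d1 + a1^3*d2 + a1^2*g1*b2)"
  using assms unfolding hiso_def
  apply (intro conjI)
  apply simp
  apply algebra
  apply algebra
  apply algebra
  apply algebra
  apply algebra
  done


lemma scale_iso:
  fixes u z :: "'a::field"
  assumes z: "z^3 = 1"
  shows "hessian_iso u (z*u)"
proof -
  define b where "b = (z^2-1)*(u+3+3*z^2)"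
  have "z \<noteq> 0" using z by auto
  have "hiso (u+6) (u^2+3*u+9) (z*u+6) ((z*u)^2+3*(z*u)+9) (z^2) b (3*z^2-3) (-3*b)"
    unfolding hiso_def b_def using z \<open>z \<noteq> 0\<close>
    apply (intro conjI)
    apply simp
    apply algebra+
    done
  then show ?thesis unfolding hessian_iso_hiso by blast
qed

lemma hessian_iso_trans: "hessian_iso u x \<Longrightarrow> hessian_iso x y \<Longrightarrow> hessian_iso u y"
  unfolding hessian_iso_hiso using hiso_trans by blast



lemma nine_ne: assumes "(3::'a::field) \<noteq> 0" shows "(9::'a) \<noteq> 0"
proof -
  have "(9::'a) = 3*3" by simp
  also have "\<dots> \<noteq> 0" using assms by (metis no_zero_divisors)
  finally show ?thesis .
qed

lemma T_iso:
  fixes x w :: "'a::field"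
  assumes w: "w^2+w+1 = 0" and three: "(3::'a) \<noteq> 0" and x: "x^3 \<noteq> 27"
  shows "hessian_iso x (3*w*(x+6*w^2)/(x-3*w^2))"
proof -
  define D where "D = x - 3*w^2"
  define y where "y = 3*w*(x+6*w^2)/(x-3*w^2)"
  define a9 where "a9 = (x+6)+w*(3-x)"
  have w3: "w^3 = 1" using w by algebra
  have D: "D \<noteq> 0"
  proof
    assume "D = 0"
    then have "x = 3*w^2" unfolding D_def by simp
    then have "x^3 = 27*(w^3)^2" by (simp add: power_mult_distrib power_mult[symmetric])
    with w3 x show False by simp
  qed
  have Dl: "D = x+3+3*w" unfolding D_def using w by algebra
  have yD0: "y*D = 3*w*(x+6*w^2)" unfolding y_def using D unfolding D_def by simp
  have yD: "y*D = 3*w*x+18"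
  proof -
    have "3*w*(x+6*w^2) = 3*w*x+18*w^3" by algebra
    then show ?thesis using yD0 w3 by simp
  qed
  have nine: "(9::'a) \<noteq> 0" using three by (rule nine_ne)
  have c1: "a9*(3*w*x+18) + 6*a9*D - 9*(x+6)*D = (54 - 9*x - 3*x^2) * (w^2+w+1)"
    unfolding Dl a9_def by algebra
  have e1: "a9*(y+6)*D = 9*(x+6)*D"
  proof -
    have "a9*(y+6)*D = a9*(y*D) + 6*a9*D" by algebra
    also have "\<dots> = a9*(3*w*x+18) + 6*a9*D" by (simp add: yD)
    also have "\<dots> = 9*(x+6)*D" using c1 w by (simp add: diff_eq_eq)
    finally show ?thesis .
  qed
  have e1c: "a9*(y+6) = 9*(x+6)" using e1 D by (metis mult_right_cancel)
  have e1': "(a9/9)*(y+6) = x+6" using e1c nine by (simp add: field_simps)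
  have c2: "a9^3*((3*w*x+18)^2+3*(3*w*x+18)*D+9*D^2) - 729*(x^2+3*x+9)*D^2 = (63423 + 72171*w + 6561*w*x - 8019*w*x^2 - 1215*w*x^3 + 243*w*x^4 - 27*w*x^5 + 19683*w^2 - 4374*w^2*x - 2916*w^2*x^2 + 729*w^2*x^3 - 81*w^2*x^4 + 27*w^2*x^5 + 2187*w^3 - 1458*w^3*x + 243*w^3*x^2 - 81*w^3*x^3 + 54*w^3*x^4 - 9*w^3*x^5 + 25515*x - 2430*x^2 - 3078*x^3 - 459*x^4 + 9*x^5) * (w^2+w+1)"
    unfolding Dl a9_def by algebra
  have e2: "a9^3*(y^2+3*y+9)*D^2 = 729*(x^2+3*x+9)*D^2"
  proof -
    have "a9^3*(y^2+3*y+9)*D^2 = a9^3*((y*D)^2+3*(y*D)*D+9*D^2)" by algebra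
    also have "\<dots> = a9^3*((3*w*x+18)^2+3*(3*w*x+18)*D+9*D^2)" by (simp add: yD)
    also have "\<dots> = 729*(x^2+3*x+9)*D^2" using c2 w by (simp add: diff_eq_eq)
    finally show ?thesis .
  qed
  have D2: "D^2 \<noteq> 0" using D by simp
  have e2c: "a9^3*(y^2+3*y+9) = 729*(x^2+3*x+9)" using e2 D2 by (metis mult_right_cancel)
  have "(729::'a) = 9^3" by simp
  then have n729: "(729::'a) \<noteq> 0" using nine by (metis power_not_zero)
  have e2': "(a9/9)^3*(y^2+3*y+9) = x^2+3*x+9" using e2c nine n729 by (simp add: field_simps power_divide)
  have Bx: "x^2+3*x+9 \<noteq> 0"
  proof
    assume "x^2+3*x+9 = 0"
    moreover have "x^3 - 27 = (x-3)*(x^2+3*x+9)" by algebra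
    ultimately show False using x by simp
  qed
  have "a9/9 \<noteq> 0" using e2' Bx by auto
  have "hiso (x+6) (x^2+3*x+9) (y+6) (y^2+3*y+9) (a9/9) 0 0 0"
    unfolding hiso_def using e1' e2' \<open>a9/9 \<noteq> 0\<close> by simp
  then show ?thesis unfolding hessian_iso_hiso y_def by blast
qed


lemma fwd_phi:
  fixes u v :: "'a::field"
  assumes h: "hiso (u+6) (u^2+3*u+9) (v+6) (v^2+3*v+9) a b g d"
  shows "(u^4+216*u)^3*(v^3-27)^3 = (v^4+216*v)^3*(u^3-27)^3"
proof -
  define A where "A = u+6"
  define B where "B = u^2+3*u+9"
  define A' where "A' = v+6"
  define B' where "B' = v^2+3*v+9"
  have h1: "a*A' = A + 2*g" and h2: "g^2 + g*A = 3*b" and h3: "a^3*B' = B + b*A + 2*d"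
    and h4: "g*B + (d + b*g)*A + 2*g*d = 3*b^2" and h5: "b^3 = d*B + d^2 + b*d*A"
    using h unfolding hiso_def A_def B_def A'_def B'_def by auto
  have e2: "a^2*A'^2 = A^2 + 12*b" using h1 h2 by algebra
  have e4: "a^4*(A'*B') = A*B + b*A^2 + 6*b^2" using h1 h2 h3 h4 by algebra
  have e6: "a^6*B'^2 = B^2 + 2*b*A*B + b^2*A^2 + 4*b^3" using h3 h5 by algebra
  have e8: "b*(3*b^3 + A^2*b^2 + 3*A*B*b + 3*B^2) = 0" using h2 h4 h5 by algebra
  have c4: "a^4*(A'^4 - 24*A'*B') = A^4 - 24*A*B" using e2 e4 by algebra
  have dl: "a^12*(B'^3*(A'^3-27*B')) = B^3*(A^3-27*B)" using e2 e4 e6 e8 by algebra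
  have cu: "A^4 - 24*A*B = u^4+216*u" "B^3*(A^3-27*B) = (u^3-27)^3" unfolding A_def B_def by algebra+
  have cv: "A'^4 - 24*A'*B' = v^4+216*v" "B'^3*(A'^3-27*B') = (v^3-27)^3" unfolding A'_def B'_def by algebra+
  have "(u^4+216*u)^3*(v^3-27)^3 = (a^4*(v^4+216*v))^3*(v^3-27)^3" using c4 cu cv by simp
  also have "\<dots> = (v^4+216*v)^3*(a^12*(v^3-27)^3)" by algebra
  also have "\<dots> = (v^4+216*v)^3*(u^3-27)^3" using dl cu cv by simp
  finally show ?thesis .
qed


lemma three_zero_facts: assumes "(3::'a::field) = 0"
  shows "(6::'a) = 0" "(9::'a) = 0" "(27::'a) = 0" "(12::'a) = 0" "(216::'a) = 0"
proof -
  have "(6::'a) = 2*3" "(9::'a) = 3*3" "(27::'a) = 9*3" "(12::'a) = 4*3" "(216::'a) = 72*3" by simp_all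
  then show "(6::'a) = 0" "(9::'a) = 0" "(27::'a) = 0" "(12::'a) = 0" "(216::'a) = 0" using assms by simp_all
qed



lemma B_ne:
  fixes u :: "'a::field"
  assumes "u^3 \<noteq> 27" shows "u^2+3*u+9 \<noteq> 0" "u - 3 \<noteq> 0"
proof -
  have f: "u^3 - 27 = (u-3)*(u^2+3*u+9)" by algebra
  show "u^2+3*u+9 \<noteq> 0" "u - 3 \<noteq> 0" using assms f by auto
qed

lemma cube_case:
  fixes u v a :: "'a::field"
  assumes u: "u^3 \<noteq> 27" and h1: "a*(v+6) = u+6" and h3: "a^3*(v^2+3*v+9) = u^2+3*u+9"
  shows "v = u \<or> (\<exists>w::'a. w^2+w+1 = 0 \<and> (3::'a) \<noteq> 0)"
proof -
  have f: "(a-1)*(27*a^2 - 9*(u+3)*a + (u^2+3*u+9)) = 0" using h1 h3 by algebra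
  show ?thesis
  proof (cases "a = 1")
    case True
    then show ?thesis using h1 by simp
  next
    case False
    then have Q: "27*a^2 - 9*(u+3)*a + (u^2+3*u+9) = 0" using f by simp
    have three: "(3::'a) \<noteq> 0"
    proof
      assume t: "(3::'a) = 0"
      note z = three_zero_facts[OF t]
      have "u^2 = 27*a^2 - 9*(u+3)*a + (u^2+3*u+9)" using t z by (simp add: algebra_simps)
      then have "u^2 = 0" using Q by (rule trans)
      then have "u = 0" by simp
      then show False using u z by simp
    qed
    have u3: "u - 3 \<noteq> 0" using B_ne[OF u] by simp
    define w where "w = (9*a - 3 - 2*u)/(u-3)"
    have wd: "w*(u-3) = 9*a - 3 - 2*u" unfolding w_def using u3 by simp
    have "(u-3)^2*(w^2+w+1) = 3*(27*a^2 - 9*(u+3)*a + (u^2+3*u+9))"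
    proof -
      have "(u-3)^2*(w^2+w+1) = (w*(u-3))^2 + (w*(u-3))*(u-3) + (u-3)^2" by algebra
      also have "\<dots> = 3*(27*a^2 - 9*(u+3)*a + (u^2+3*u+9))" unfolding wd by algebra
      finally show ?thesis .
    qed
    then have "(u-3)^2*(w^2+w+1) = 0" by (simp only: Q mult_zero_right)
    then have "w^2+w+1 = 0" using u3 by simp
    then show ?thesis using three by blast
  qed
qed

lemma fwd_split:
  fixes u v :: "'a::field"
  assumes u: "u^3 \<noteq> 27" and h: "hiso (u+6) (u^2+3*u+9) (v+6) (v^2+3*v+9) a b g d"
  shows "v = u \<or> (\<exists>w::'a. w^2+w+1 = 0 \<and> (3::'a) \<noteq> 0)"
proof -
  define A where "A = u+6"
  define B where "B = u^2+3*u+9"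
  have anz: "a \<noteq> 0" and h1: "a*(v+6) = A + 2*g" and h2: "g^2 + g*A = 3*b" and h3: "a^3*(v^2+3*v+9) = B + b*A + 2*d"
    and h4: "g*B + (d + b*g)*A + 2*g*d = 3*b^2" and h5: "b^3 = d*B + d^2 + b*d*A"
    using h unfolding hiso_def A_def B_def by auto
  have Bnz: "B \<noteq> 0" and u3: "u - 3 \<noteq> 0" using B_ne[OF u] unfolding B_def by auto
  show ?thesis
  proof (cases "b = 0")
    case True
    then have "d*(d+B) = 0" using h5 by algebra
    then have "d = 0 \<or> d + B = 0" by simp
    then consider "d = 0" | "d = -B" by (auto simp: eq_neg_iff_add_eq_0)
    then show ?thesis
    proof cases
      case 1
      then have "g*B = 0" using h4 True by simp
      then have "g = 0" using Bnz by simp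
      then show ?thesis using cube_case[OF u, of a] h1 h3 True 1 unfolding A_def B_def by simp
    next
      case 2
      then have "B*(g + A) = 0" using h4 True by algebra
      then have g: "g = -A" using Bnz by (simp add: add_eq_0_iff)
      have "(-a)*(v+6) = u+6" using h1 g unfolding A_def by algebra
      moreover have "(-a)^3*(v^2+3*v+9) = u^2+3*u+9" using h3 True 2 unfolding B_def by algebra
      ultimately show ?thesis using cube_case[OF u, of "-a"] by simp
    qed
  next
    case False
    have e8: "b*(3*b^3 + A^2*b^2 + 3*A*B*b + 3*B^2) = 0" using h2 h4 h5 by algebra
    then have psi: "3*b^3 + A^2*b^2 + 3*A*B*b + 3*B^2 = 0" using False by simp
    have three: "(3::'a) \<noteq> 0"
    proof
      assume t: "(3::'a) = 0"
      note z = three_zero_facts[OF t]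
      have "3*b^3 + A^2*b^2 + 3*A*B*b + 3*B^2 = A^2*b^2" using t by simp
      then have "A = 0" using psi False by simp
      then have "u = -6" unfolding A_def by (simp add: eq_neg_iff_add_eq_0)
      then have "u^3 = - 8 * 27" by simp
      then show False using u z by simp
    qed
    define t where "t = 3*B + A*b"
    have BA: "B = A^2 - 9*A + 27" "u - 3 = A - 9" unfolding A_def B_def by algebra+
    have tc: "t^3 = ((u-3)*b)^3" unfolding t_def BA using psi[unfolded BA] by algebra
    show ?thesis
    proof (cases "t = (u-3)*b")
      case False
      define w where "w = t/((u-3)*b)"
      have "(u-3)*b \<noteq> 0" using u3 \<open>b \<noteq> 0\<close> by simp
      then have w3: "w^3 = 1" "w \<noteq> 1" unfolding w_def using tc False by (simp_all add: power_divide)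
      have "(w-1)*(w^2+w+1) = 0" using w3 by algebra
      then have "w^2+w+1 = 0" using w3 by simp
      then show ?thesis using three by blast
    next
      case True
      then have "3*B = -9*b" unfolding t_def using BA by algebra
      then have bB: "3*b = -B" using three by algebra
      have dB: "B - d \<noteq> 0"
      proof
        assume "B - d = 0"
        then have "d = B" by simp
        have "27*b^3 = 27*(d*B + d^2 + b*d*A)" using h5 by simp
        then have "(-B)^3 = 27*(B*B + B^2) + 9*(3*b)*B*A" using \<open>d = B\<close> bB by algebra
        then have "B^2*(u-3)^2 = 0" using bB unfolding A_def B_def by algebra
        then show False using Bnz u3 by simp
      qed
      have q: "27*d^2 - 9*B*(u+3)*d + B^3 = 0"
      proof -
        have "27*b^3 = 27*(d*B + d^2 + b*d*A)" using h5 by simp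
        then show ?thesis using bB unfolding A_def B_def by algebra
      qed
      define w where "w = (B*u - 3*d)/(3*(B-d))"
      have wd: "w*(3*(B-d)) = B*u - 3*d" unfolding w_def using dB three by simp
      have "9*(B-d)^2*(w^2+w+1) = (w*(3*(B-d)))^2 + (w*(3*(B-d)))*(3*(B-d)) + 9*(B-d)^2" by algebra
      also have "\<dots> = 27*d^2 - 9*B*(u+3)*d + B^3" unfolding wd unfolding B_def by algebra
      finally have "9*(B-d)^2*(w^2+w+1) = 0" using q by simp
      moreover have "9*(B-d)^2 \<noteq> 0" using dB nine_ne[OF three] by simp
      ultimately have "w^2+w+1 = 0" by simp
      then show ?thesis using three by blast
    qed
  qed
qed


lemma cube_eq:
  fixes w X Y :: "'a::field"
  assumes w: "w^2+w+1 = 0" and e: "X^3 = Y^3"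
  shows "\<exists>z. z^3 = 1 \<and> X = z*Y"
proof -
  have "(X - Y)*(X - w*Y)*(X - w^2*Y) = X^3 - Y^3" using w by algebra
  then have "(X - Y)*(X - w*Y)*(X - w^2*Y) = 0" using e by simp
  moreover have "w^3 = 1" "(w^2)^3 = 1" using w by algebra+
  ultimately show ?thesis by (metis eq_iff_diff_eq_0 mult_eq_0_iff power_one mult_1)
qed

definition RR :: "'a::field \<Rightarrow> 'a \<Rightarrow> 'a" where
 "RR u V = (- 198359290368 - 2754990144*V + 1109648808*V*u^3 - 8680203*V*u^6 + 2187*V*u^9 - 12754584*V^2 - 8680203*V^2*u^3 - 190269*V^2*u^6 - 81*V^2*u^9 - 19683*V^3 + 2187*V^3*u^3 - 81*V^3*u^6 + V^3*u^9 - 2754990144*u^3 - 12754584*u^6 - 19683*u^9)"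

lemma prod_RR:
  fixes w u V :: "'a::field"
  assumes w: "w^2+w+1 = 0"
  shows "(V*(u-3)^3 - 27*(u+6)^3)*(V*(u-3*w)^3 - 27*(u+6*w)^3)*(V*(u-3*w^2)^3 - 27*(u+6*w^2)^3) = RR u V"
  unfolding RR_def using w by algebra

lemma phi_RR:
  fixes u v :: "'a::field"
  shows "(u^4+216*u)^3*(v^3-27)^3 - (v^4+216*v)^3*(u^3-27)^3 = - (v^3 - u^3) * RR u (v^3)"
  unfolding RR_def by algebra



lemma fermat_ff:
  fixes x :: "'a::{finite,field}"
  assumes x: "x \<noteq> 0"
  shows "x^(card (UNIV::'a set) - 1) = 1"
proof -
  let ?S = "UNIV - {0::'a}"
  have bij: "bij_betw ((*) x) ?S ?S"
    unfolding bij_betw_def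
  proof
    show "inj_on ((*) x) ?S" using x by (auto simp: inj_on_def)
    show "(*) x ` ?S = ?S"
    proof
      show "(*) x ` ?S \<subseteq> ?S" using x by auto
      show "?S \<subseteq> (*) x ` ?S"
      proof
        fix y assume "y \<in> ?S"
        then have "y = x * (y/x)" "y/x \<in> ?S" using x by auto
        then show "y \<in> (*) x ` ?S" by blast
      qed
    qed
  qed
  have "prod id ?S = prod (\<lambda>y. id (x*y)) ?S"
    using prod.reindex_bij_betw[OF bij, of id] by simp
  also have "\<dots> = x^card ?S * prod id ?S"
    by (simp add: prod.distrib)
  finally have eq: "prod id ?S = x^card ?S * prod id ?S" .
  have "prod id ?S \<noteq> 0" by simp
  then have "x^card ?S = 1" using eq by simp
  moreover have "card ?S = card (UNIV::'a set) - 1" by (simp add: card_Diff_singleton)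
  ultimately show ?thesis by simp
qed

lemma card_ge2: "card (UNIV::'a::{finite,field} set) \<ge> 2"
proof -
  have "{0::'a, 1} \<subseteq> UNIV" by simp
  then have "card {0::'a, 1} \<le> card (UNIV::'a set)" by (rule card_mono[OF finite_UNIV])
  then show ?thesis by simp
qed

lemma card_mod3:
  fixes w :: "'a::{finite,field}"
  assumes w3: "w^3 = 1" and w1: "w \<noteq> 1"
  shows "card (UNIV::'a set) mod 3 = 1"
proof -
  define n where "n = card (UNIV::'a set) - 1"
  have wnz: "w \<noteq> 0" using w3 by auto
  have wn: "w^n = 1" unfolding n_def using fermat_ff[OF wnz] .
  have nn: "n = 3*(n div 3) + n mod 3" by simp
  have "w^n = w^(3*(n div 3) + n mod 3)" using nn by simp
  also have "\<dots> = (w^3)^(n div 3) * w^(n mod 3)" by (simp only: power_add power_mult)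
  finally have "w^n = (w^3)^(n div 3) * w^(n mod 3)" .
  then have r: "w^(n mod 3) = 1" using wn w3 by simp
  have "n mod 3 < 3" by simp
  then consider "n mod 3 = 0" | "n mod 3 = 1" | "n mod 3 = 2" by linarith
  then have "n mod 3 = 0"
  proof cases
    case 1 then show ?thesis .
  next
    case 2 then show ?thesis using r w1 by simp
  next
    case 3
    then have "w^2 = 1" using r by simp
    then have "w^3 = w" by (simp add: power3_eq_cube power2_eq_square)
    then show ?thesis using w3 w1 by simp
  qed
  note nm = this
  have cn: "card (UNIV::'a set) = n + 1" unfolding n_def using card_ge2[where 'a='a] by simp
  have ar3: "\<And>N n::nat. n mod 3 = 0 \<Longrightarrow> N = n + 1 \<Longrightarrow> N mod 3 = 1" by presburger
  show ?thesis by (rule ar3[OF nm cn])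
qed

lemma prim_exists:
  assumes c: "card (UNIV::'a::{finite,field} set) mod 3 = 1"
  shows "\<exists>w::'a. w^3 = 1 \<and> w \<noteq> 1"
proof (rule ccontr)
  assume no: "\<not> (\<exists>w::'a. w^3 = 1 \<and> w \<noteq> 1)"
  define m where "m = (card (UNIV::'a set) - 1) div 3"
  have ar: "\<And>N::nat. N mod 3 = 1 \<Longrightarrow> N \<ge> 2 \<Longrightarrow> N - 1 = 3*((N - 1) div 3) \<and> (N - 1) div 3 \<ge> 1"
    by presburger
  have cm: "card (UNIV::'a set) - 1 = 3*m" and m1: "m \<ge> 1" unfolding m_def using ar[OF c card_ge2] by auto
  have all: "\<forall>x::'a. x \<noteq> 0 \<longrightarrow> x^m = 1"
  proof (intro allI impI)
    fix x :: 'a assume "x \<noteq> 0"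
    then have "(x^m)^3 = 1" using fermat_ff[of x] cm by (simp add: power_mult[symmetric] mult.commute)
    then show "x^m = 1" using no by blast
  qed
  define p :: "'a poly" where "p = monom 1 m + (- 1)"
  have deg: "degree p = m" unfolding p_def using m1 by (subst degree_add_eq_left) (simp_all add: degree_monom_eq)
  have pnz: "p \<noteq> 0" using deg m1 by auto
  have "UNIV - {0::'a} \<subseteq> {x. poly p x = 0}" using all unfolding p_def by (auto simp: poly_monom)
  then have "card (UNIV - {0::'a}) \<le> card {x. poly p x = 0}" by (intro card_mono) auto
  also have "\<dots> \<le> m" using card_poly_roots_bound[OF pnz] deg by simp
  finally have "card (UNIV::'a set) - 1 \<le> m" by (simp add: card_Diff_singleton)
  then show False using cm m1 by simp
qed

theorem mainTheorem10:
  fixes u v :: "'a::{finite, field}"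
  assumes "u^3 \<noteq> 27" and "v^3 \<noteq> 27"
  shows "hessian_iso u v \<longleftrightarrow>
    (\<exists>\<zeta>1 \<zeta>2 :: 'a. \<zeta>1^3 = 1 \<and> \<zeta>2^3 = 1 \<and>
       (v = \<zeta>1 * u \<or>
        (card (UNIV :: 'a set) mod 3 = 1 \<and> v = 3 * \<zeta>1 * (u + 6 * \<zeta>2) / (u - 3 * \<zeta>2))))"
proof
  assume iso: "hessian_iso u v"
  then obtain a b g d where h: "hiso (u+6) (u^2+3*u+9) (v+6) (v^2+3*v+9) a b g d"
    unfolding hessian_iso_hiso by blast
  have phi: "(u^4+216*u)^3*(v^3-27)^3 = (v^4+216*v)^3*(u^3-27)^3" by (rule fwd_phi[OF h])
  from fwd_split[OF assms(1) h] show "\<exists>\<zeta>1 \<zeta>2 :: 'a. \<zeta>1^3 = 1 \<and> \<zeta>2^3 = 1 \<and>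
       (v = \<zeta>1 * u \<or>
        (card (UNIV :: 'a set) mod 3 = 1 \<and> v = 3 * \<zeta>1 * (u + 6 * \<zeta>2) / (u - 3 * \<zeta>2)))"
  proof
    assume "v = u"
    then show ?thesis by (intro exI[of _ 1]) simp
  next
    assume "\<exists>w::'a. w^2+w+1 = 0 \<and> (3::'a) \<noteq> 0"
    then obtain w :: 'a where w: "w^2+w+1 = 0" and three: "(3::'a) \<noteq> 0" by blast
    have w3: "w^3 = 1" using w by algebra
    have w1: "w \<noteq> 1"
    proof
      assume "w = 1"
      then have "(3::'a) = w^2+w+1" by simp
      then show False using w three by simp
    qed
    have card: "card (UNIV :: 'a set) mod 3 = 1" by (rule card_mod3[OF w3 w1])
    have "- (v^3 - u^3) * RR u (v^3) = 0" using phi phi_RR[of u v] by simp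
    then have "u^3 = v^3 \<or> RR u (v^3) = 0" by simp
    then show ?thesis
    proof
      assume "u^3 = v^3"
      from cube_eq[OF w this[symmetric]] obtain z where "z^3 = 1" "v = z*u" by blast
      then show ?thesis by (intro exI[of _ z] exI[of _ 1]) simp
    next
      assume "RR u (v^3) = 0"
      define F where "F = (\<lambda>z::'a. v^3*(u-3*z)^3 - 27*(u+6*z)^3)"
      have "F 1 * F w * F (w^2) = 0"
        using prod_RR[OF w, of "v^3" u] \<open>RR u (v^3) = 0\<close> unfolding F_def by simp
      then have "F 1 = 0 \<or> F w = 0 \<or> F (w^2) = 0" by (simp only: mult_eq_0_iff disj_assoc)
      moreover have "(w^2)^3 = 1" using w by algebra
      ultimately obtain z2 :: 'a where z2: "z2^3 = 1" and "F z2 = 0"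
        using w3 by (elim disjE) (rule that; simp)+
      then have f: "v^3*(u-3*z2)^3 - 27*(u+6*z2)^3 = 0" unfolding F_def by simp
      have "(v*(u-3*z2))^3 = (3*(u+6*z2))^3" using f by algebra
      from cube_eq[OF w this] obtain z1 where z1: "z1^3 = 1" "v*(u-3*z2) = z1*(3*(u+6*z2))" by blast
      have nz: "u - 3*z2 \<noteq> 0"
      proof
        assume "u - 3*z2 = 0"
        then have "u = 3*z2" by simp
        then have "u^3 = 27*z2^3" by (simp add: power_mult_distrib)
        then show False using z2 assms(1) by simp
      qed
      have "v = 3 * z1 * (u + 6 * z2) / (u - 3 * z2)" using z1(2) nz by (simp add: field_simps)
      then show ?thesis using z1(1) z2 card by blast
    qed
  qed
next
  assume "\<exists>\<zeta>1 \<zeta>2 :: 'a. \<zeta>1^3 = 1 \<and> \<zeta>2^3 = 1 \<and>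
       (v = \<zeta>1 * u \<or>
        (card (UNIV :: 'a set) mod 3 = 1 \<and> v = 3 * \<zeta>1 * (u + 6 * \<zeta>2) / (u - 3 * \<zeta>2)))"
  then obtain z1 z2 :: 'a where z1: "z1^3 = 1" and z2: "z2^3 = 1" and
    c: "v = z1 * u \<or> (card (UNIV :: 'a set) mod 3 = 1 \<and> v = 3 * z1 * (u + 6 * z2) / (u - 3 * z2))"
    by blast
  from c show "hessian_iso u v"
  proof
    assume "v = z1*u"
    then show ?thesis using scale_iso[OF z1] by simp
  next
    assume "card (UNIV :: 'a set) mod 3 = 1 \<and> v = 3 * z1 * (u + 6 * z2) / (u - 3 * z2)"
    then have cd: "card (UNIV :: 'a set) mod 3 = 1" and v: "v = 3 * z1 * (u + 6 * z2) / (u - 3 * z2)" by auto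
    obtain w :: 'a where w3: "w^3 = 1" and w1: "w \<noteq> 1" using prim_exists[OF cd] by blast
    have "(w-1)*(w^2+w+1) = 0" using w3 by algebra
    then have w: "w^2+w+1 = 0" using w1 by simp
    have three: "(3::'a) \<noteq> 0"
    proof
      assume t: "(3::'a) = 0"
      have "(w-1)^3 = (w^3 - 1) - 3*(w^2 - w)" by algebra
      then have "(w-1)^3 = 0" using t w3 by simp
      then show False using w1 by simp
    qed
    define x where "x = w^2*z2^2*u"
    have zx: "(w^2*z2^2)^3 = 1"
    proof -
      have "(w^2*z2^2)^3 = (w^3)^2*(z2^3)^2" by algebra
      then show ?thesis using w3 z2 by simp
    qed
    have i1: "hessian_iso u x" unfolding x_def using scale_iso[OF zx, of u] by simp
    have x3: "x^3 \<noteq> 27"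
    proof -
      have "x^3 = (w^2*z2^2)^3 * u^3" unfolding x_def by algebra
      then show ?thesis using zx assms(1) by simp
    qed
    define y where "y = 3*w*(x+6*w^2)/(x-3*w^2)"
    have i2: "hessian_iso x y" unfolding y_def by (rule T_iso[OF w three x3])
    have zy: "(z1*w^2)^3 = 1"
    proof -
      have "(z1*w^2)^3 = z1^3*(w^3)^2" by algebra
      then show ?thesis using w3 z1 by simp
    qed
    have i3: "hessian_iso y ((z1*w^2)*y)" by (rule scale_iso[OF zy])
    have nz: "u - 3*z2 \<noteq> 0"
    proof
      assume "u - 3*z2 = 0"
      then have "u = 3*z2" by simp
      then have "u^3 = 27*z2^3" by (simp add: power_mult_distrib)
      then show False using z2 assms(1) by simp
    qed
    have nx: "x - 3*w^2 \<noteq> 0"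
    proof
      assume "x - 3*w^2 = 0"
      then have "x = 3*w^2" by simp
      then have "x^3 = 27*(w^3)^2" by (simp add: power_mult_distrib power_mult[symmetric])
      then show False using w3 x3 by simp
    qed
    have yx: "y*(x - 3*w^2) = 3*w*(x+6*w^2)" unfolding y_def using nx by simp
    have key: "z1*w^2*(3*w*(x+6*w^2))*(u-3*z2) = 3*z1*(u+6*z2)*(x-3*w^2)"
      unfolding x_def using w3 z2 by algebra
    have "(z1*w^2*y*(u-3*z2))*(x-3*w^2) = (3*z1*(u+6*z2))*(x-3*w^2)"
    proof -
      have "(z1*w^2*y*(u-3*z2))*(x-3*w^2) = z1*w^2*(y*(x - 3*w^2))*(u-3*z2)" by algebra
      also have "\<dots> = 3*z1*(u+6*z2)*(x-3*w^2)" unfolding yx by (rule key)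
      finally show ?thesis by simp
    qed
    then have "z1*w^2*y*(u-3*z2) = 3*z1*(u+6*z2)" using nx by (metis mult_right_cancel)
    then have "(z1*w^2)*y = v" unfolding v using nz by (simp add: field_simps)
    then show ?thesis using hessian_iso_trans[OF hessian_iso_trans[OF i1 i2] i3] by simp
  qed
qed

end
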